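(* Let $\alpha=\beta\otimes\gamma:A^{\Delta}\to(H,V)\circ(H',V')$ be a homomorphism, where $(H,V),(H',V')$ are finite forest algebras with idempotent and commutative horizontal monoids, $\beta:A^{\Delta}\to(H,V)$ is nonconfusing, and $\gamma:(A\times H)^{\Delta}\to(H',V')$ is 1-definite. Then $\alpha$ is nonconfusing.
   Context: $A^{\Delta}$: free forest algebra of forests (finite ordered sequences of finite ordered labelled trees, under concatenation) and contexts (forests with one hole) over $A$. Forest algebra: additive monoid $H$, monoid $V$ acting faithfully on the left, containing $g\mapsto g+h$, $g\mapsto h+g$. Wreath product $(H,V)\circ(H',V')=(H\times H',V\times V'^{H})$ with $(v,f)(h,h')=(vh,f(h)h')$; $\beta\otimes\gamma$ maps $a$ to $(\beta(a),h\mapsto\gamma(a,h))$, so $\beta\otimes\gamma(s)=(\beta(s),\gamma(s^\beta))$ with $s^\beta$ relabeling each node with subtree $at$ by $(a,\beta(t))$. $\gamma$ is 1-definite if $\gamma(s)$ depends only on the set of labels of the root nodes of $s$. Reachability: $h\le h'$ iff $h=vh'$ for some $v$; classes of mutual reachability. For a homomorphism $\delta$ and class $\Gamma$, $\delta_\Gamma$ is the quotient identifying $\{h:h\not>\Gamma\}$ to one absorbing $\infty$; $s^{\delta_\Gamma}$ relabels nodes with subtree $at$ by $(a,\delta_\Gamma(t))$. $\sim_k$ on forests over an alphabet $B$: $\sim_0$ total; $s\sim_{k+1}s'$ iff the sets $\{(b_i,[s_i]_{\sim_k})\}$ for $s=\sum b_is_i$ and for $s'$ coincide. $s_1\equiv_{\delta,k,\Gamma}s_2$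 iff $(s_1)^{\delta_\Gamma}\sim_k(s_2)^{\delta_\Gamma}$ and $\delta(s_1),\delta(s_2)\in\Gamma$. $\delta$ is nonconfusing if there is $k>0$ such that for every reachability class $\Gamma$ of its target, $s_1\equiv_{\delta,k,\Gamma}s_2$ implies $\delta(s_1)=\delta(s_2)$. *)

theory Defs
  imports Main
begin

datatype 'a tree = Node (root: 'a) (children: "'a tree list")

type_synonym 'a forest = "'a tree list"

text \<open>A forest is a finite list of trees; forest concatenation (the horizontal
operation of the free forest algebra) is list append, the empty forest is [].\<close>

text \<open>A forest algebra (H,V): the horizontal monoid H is a type with operation pl
and unit z; V is a set of transformations of H (so the action is faithful by
construction) which is a monoid under composition and contains g\<mapsto>g+h, g\<mapsto>h+g.\<close>

definition forest_algebra :: "('h \<Rightarrow> 'h \<Rightarrow> 'h) \<Rightarrow> 'h \<Rightarrow> ('h \<Rightarrow> 'h) set \<Rightarrow> bool" where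
  "forest_algebra pl z V \<longleftrightarrow>
     (\<forall>a b c. pl (pl a b) c = pl a (pl b c)) \<and>
     (\<forall>a. pl z a = a \<and> pl a z = a) \<and>
     id \<in> V \<and> (\<forall>v\<in>V. \<forall>w\<in>V. v \<circ> w \<in> V) \<and>
     (\<forall>h. (\<lambda>g. pl g h) \<in> V \<and> (\<lambda>g. pl h g) \<in> V)"

definition idem_comm :: "('h \<Rightarrow> 'h \<Rightarrow> 'h) \<Rightarrow> bool" where
  "idem_comm pl \<longleftrightarrow> (\<forall>h. pl h h = h) \<and> (\<forall>g h. pl g h = pl h g)"

text \<open>A homomorphism A^Delta \<rightarrow> (H,V) is determined by the images lab a \<in> V of the
one-node contexts a\<box>; its value on forests is computed as follows.\<close>

primrec evalT :: "('h \<Rightarrow> 'h \<Rightarrow> 'h) \<Rightarrow> 'h \<Rightarrow> ('a \<Rightarrow> 'h \<Rightarrow> 'h) \<Rightarrow> 'a tree \<Rightarrow> 'h" where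
  "evalT pl z lab (Node a ts) = lab a (foldr pl (map (evalT pl z lab) ts) z)"

definition evalF :: "('h \<Rightarrow> 'h \<Rightarrow> 'h) \<Rightarrow> 'h \<Rightarrow> ('a \<Rightarrow> 'h \<Rightarrow> 'h) \<Rightarrow> 'a forest \<Rightarrow> 'h" where
  "evalF pl z lab s = foldr pl (map (evalT pl z lab) s) z"

definition is_hom :: "('h \<Rightarrow> 'h) set \<Rightarrow> ('a \<Rightarrow> 'h \<Rightarrow> 'h) \<Rightarrow> bool" where
  "is_hom V lab \<longleftrightarrow> (\<forall>a. lab a \<in> V)"

primrec relabT :: "('a forest \<Rightarrow> 'c) \<Rightarrow> 'a tree \<Rightarrow> ('a \<times> 'c) tree" where
  "relabT f (Node a ts) = Node (a, f ts) (map (relabT f) ts)"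

definition relab :: "('a forest \<Rightarrow> 'c) \<Rightarrow> 'a forest \<Rightarrow> ('a \<times> 'c) forest" where
  "relab f s = map (relabT f) s"

definition one_definite :: "('h \<Rightarrow> 'h \<Rightarrow> 'h) \<Rightarrow> 'h \<Rightarrow> ('b \<Rightarrow> 'h \<Rightarrow> 'h) \<Rightarrow> bool" where
  "one_definite pl z lab \<longleftrightarrow>
     (\<forall>s t :: 'b forest. set (map root s) = set (map root t) \<longrightarrow> evalF pl z lab s = evalF pl z lab t)"

definition wr_plus :: "('h \<Rightarrow> 'h \<Rightarrow> 'h) \<Rightarrow> ('g \<Rightarrow> 'g \<Rightarrow> 'g) \<Rightarrow> ('h \<times> 'g) \<Rightarrow> ('h \<times> 'g) \<Rightarrow> ('h \<times> 'g)" where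
  "wr_plus pl pl' p q = (pl (fst p) (fst q), pl' (snd p) (snd q))"

definition wr_V :: "('h \<Rightarrow> 'h) set \<Rightarrow> ('g \<Rightarrow> 'g) set \<Rightarrow> (('h \<times> 'g) \<Rightarrow> ('h \<times> 'g)) set" where
  "wr_V V V' = {(\<lambda>p. (v (fst p), f (fst p) (snd p))) | v f. v \<in> V \<and> (\<forall>h. f h \<in> V')}"

definition tensor :: "('a \<Rightarrow> 'h \<Rightarrow> 'h) \<Rightarrow> ('a \<times> 'h \<Rightarrow> 'g \<Rightarrow> 'g) \<Rightarrow> 'a \<Rightarrow> ('h \<times> 'g) \<Rightarrow> ('h \<times> 'g)" where
  "tensor \<beta> \<gamma> a = (\<lambda>p. (\<beta> a (fst p), \<gamma> (a, fst p) (snd p)))"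

definition reach :: "('h \<Rightarrow> 'h) set \<Rightarrow> 'h \<Rightarrow> 'h \<Rightarrow> bool" where
  "reach V h h' \<longleftrightarrow> (\<exists>v\<in>V. h = v h')"

definition reach_classes :: "('h \<Rightarrow> 'h) set \<Rightarrow> 'h set set" where
  "reach_classes V = {{g. reach V g h \<and> reach V h g} | h. True}"

definition above :: "('h \<Rightarrow> 'h) set \<Rightarrow> 'h \<Rightarrow> 'h set \<Rightarrow> bool" where
  "above V h \<Gamma> \<longleftrightarrow> (\<exists>g\<in>\<Gamma>. reach V g h) \<and> h \<notin> \<Gamma>"

text \<open>delta_Gamma: values not above Gamma collapse to the absorbing element None (= infinity).\<close>

definition delta_cls :: "('h \<Rightarrow> 'h \<Rightarrow> 'h) \<Rightarrow> 'h \<Rightarrow> ('h \<Rightarrow> 'h) set \<Rightarrow> ('a \<Rightarrow> 'h \<Rightarrow> 'h)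
    \<Rightarrow> 'h set \<Rightarrow> 'a forest \<Rightarrow> 'h option" where
  "delta_cls pl z V lab \<Gamma> t =
     (if above V (evalF pl z lab t) \<Gamma> then Some (evalF pl z lab t) else None)"

fun simk :: "nat \<Rightarrow> 'b forest \<Rightarrow> 'b forest \<Rightarrow> bool" where
  "simk 0 s s' = True"
| "simk (Suc k) s s' =
     ((\<forall>t\<in>set s. \<exists>t'\<in>set s'. root t = root t' \<and> simk k (children t) (children t')) \<and>
      (\<forall>t'\<in>set s'. \<exists>t\<in>set s. root t = root t' \<and> simk k (children t) (children t')))"

definition equiv_dkG :: "('h \<Rightarrow> 'h \<Rightarrow> 'h) \<Rightarrow> 'h \<Rightarrow> ('h \<Rightarrow> 'h) set \<Rightarrow> ('a \<Rightarrow> 'h \<Rightarrow> 'h)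
    \<Rightarrow> nat \<Rightarrow> 'h set \<Rightarrow> 'a forest \<Rightarrow> 'a forest \<Rightarrow> bool" where
  "equiv_dkG pl z V lab k \<Gamma> s1 s2 \<longleftrightarrow>
     simk k (relab (delta_cls pl z V lab \<Gamma>) s1) (relab (delta_cls pl z V lab \<Gamma>) s2) \<and>
     evalF pl z lab s1 \<in> \<Gamma> \<and> evalF pl z lab s2 \<in> \<Gamma>"

definition nonconfusing :: "('h \<Rightarrow> 'h \<Rightarrow> 'h) \<Rightarrow> 'h \<Rightarrow> ('h \<Rightarrow> 'h) set \<Rightarrow> ('a \<Rightarrow> 'h \<Rightarrow> 'h) \<Rightarrow> bool" where
  "nonconfusing pl z V lab \<longleftrightarrow>
     (\<exists>k>0. \<forall>\<Gamma>\<in>reach_classes V. \<forall>s1 s2.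
        equiv_dkG pl z V lab k \<Gamma> s1 s2 \<longrightarrow> evalF pl z lab s1 = evalF pl z lab s2)"

end

theory Submission
  imports Defs
begin

definition clsof :: "('h \<Rightarrow> 'h) set \<Rightarrow> 'h \<Rightarrow> 'h set" where
  "clsof V x = {y. reach V y x \<and> reach V x y}"

definition Fl :: "'h set \<Rightarrow> ('a \<times> ('h \<times> 'g) option) \<Rightarrow> ('a \<times> 'h option)" where
  "Fl D = (\<lambda>(a,oo). (a, case oo of None \<Rightarrow> None | Some p \<Rightarrow> if fst p \<in> D then None else Some (fst p)))"

lemma simk_SucD:
  "simk (Suc k) s s' \<Longrightarrow> (\<forall>t\<in>set s. \<exists>t'\<in>set s'. root t = root t' \<and> simk k (children t) (children t')) \<and>
     (\<forall>t'\<in>set s'. \<exists>t\<in>set s. root t = root t' \<and> simk k (children t) (children t'))"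
  by (simp only: simk.simps(2))

lemma simk_SucI:
  "(\<forall>t\<in>set s. \<exists>t'\<in>set s'. root t = root t' \<and> simk k (children t) (children t')) \<Longrightarrow>
     (\<forall>t'\<in>set s'. \<exists>t\<in>set s. root t = root t' \<and> simk k (children t) (children t')) \<Longrightarrow> simk (Suc k) s s'"
  by (simp only: simk.simps(2))

lemma simk_mono: "simk (Suc k) (s::'a forest) s' \<Longrightarrow> simk k s s'"
proof (induction k arbitrary: s s')
  case 0 then show ?case by simp
next
  case (Suc k)
  note P = simk_SucD[OF Suc.prems]
  note P1 = conjunct1[OF P] and P2 = conjunct2[OF P]
  have A: "\<exists>t'\<in>set s'. root t = root t' \<and> simk k (children t) (children t')" if tt: "t \<in> set s" for t
  proof -
    from P1 tt obtain t' where "t' \<in> set s'" "root t = root t'" "simk (Suc k) (children t) (children t')"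
      by blast
    then show ?thesis using Suc.IH[of "children t" "children t'"] by blast
  qed
  have B: "\<exists>t\<in>set s. root t = root t' \<and> simk k (children t) (children t')" if tt: "t' \<in> set s'" for t'
  proof -
    from P2 tt obtain t where "t \<in> set s" "root t = root t'" "simk (Suc k) (children t) (children t')"
      by blast
    then show ?thesis using Suc.IH[of "children t" "children t'"] by blast
  qed
  show ?case using A B by (intro simk_SucI) blast+
qed

lemma simk_map: "simk k s s' \<Longrightarrow> simk k (map (map_tree F) s) (map (map_tree F) s')"
proof (induction k arbitrary: s s')
  case 0 then show ?case by simp
next
  case (Suc k)
  have r: "root (map_tree F t) = F (root t)" and c: "children (map_tree F t) = map (map_tree F) (children t)" for t
    by (cases t; simp)+
  note P = simk_SucD[OF Suc.prems]
  note P1 = conjunct1[OF P] and P2 = conjunct2[OF P]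
  have A: "\<exists>u'\<in>set (map (map_tree F) s'). root u = root u' \<and> simk k (children u) (children u')"
    if uu: "u \<in> set (map (map_tree F) s)" for u
  proof -
    obtain t where t: "t \<in> set s" "u = map_tree F t" using uu by auto
    obtain t' where t': "t' \<in> set s'" "root t = root t'" "simk k (children t) (children t')"
      using P1 t(1) by blast
    have "simk k (children u) (children (map_tree F t'))" using t t' Suc.IH[of "children t" "children t'"] by (simp add: c)
    moreover have "root u = root (map_tree F t')" using t t' by (simp add: r)
    moreover have "map_tree F t' \<in> set (map (map_tree F) s')" using t' by simp
    ultimately show ?thesis by blast
  qed
  have B: "\<exists>u\<in>set (map (map_tree F) s). root u = root u' \<and> simk k (children u) (children u')"
    if uu: "u' \<in> set (map (map_tree F) s')" for u'
  proof -
    obtain t' where t: "t' \<in> set s'" "u' = map_tree F t'" using uu by auto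
    obtain t where t': "t \<in> set s" "root t = root t'" "simk k (children t) (children t')"
      using P2 t(1) by blast
    have "simk k (children (map_tree F t)) (children u')" using t t' Suc.IH[of "children t" "children t'"] by (simp add: c)
    moreover have "root (map_tree F t) = root u'" using t t' by (simp add: r)
    moreover have "map_tree F t \<in> set (map (map_tree F) s)" using t' by simp
    ultimately show ?thesis by blast
  qed
  show ?case using A B by (intro simk_SucI) blast+
qed

lemma fst_foldr: "fst (foldr (wr_plus pl pl') xs (z,z')) = foldr pl (map fst xs) z"
  by (induction xs) (simp_all add: wr_plus_def)

lemma snd_foldr: "snd (foldr (wr_plus pl pl') xs (z,z')) = foldr pl' (map snd xs) z'"
  by (induction xs) (simp_all add: wr_plus_def)

lemma fst_evalT: "fst (evalT (wr_plus pl pl') (z,z') (tensor \<beta> \<gamma>) t) = evalT pl z \<beta> t"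
proof (induction t)
  case (Node a ts)
  have 1: "map (fst \<circ> evalT (wr_plus pl pl') (z,z') (tensor \<beta> \<gamma>)) ts = map (evalT pl z \<beta>) ts"
    using Node by auto
  have 3: "fst (tensor \<beta> \<gamma> a X) = \<beta> a (fst X)" for X by (simp add: tensor_def)
  show ?case unfolding evalT.simps 3 fst_foldr map_map 1 ..
qed

lemma fst_evalF: "fst (evalF (wr_plus pl pl') (z,z') (tensor \<beta> \<gamma>) s) = evalF pl z \<beta> s"
  unfolding evalF_def by (simp add: fst_foldr fst_evalT comp_def)

lemma snd_evalT: "snd (evalT (wr_plus pl pl') (z,z') (tensor \<beta> \<gamma>) t)
   = evalT pl' z' \<gamma> (relabT (evalF pl z \<beta>) t)"
proof (induction t)
  case (Node a ts)
  have 1: "map (snd \<circ> evalT (wr_plus pl pl') (z,z') (tensor \<beta> \<gamma>)) ts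
     = map (evalT pl' z' \<gamma> \<circ> relabT (evalF pl z \<beta>)) ts"
    using Node by auto
  have 2: "fst (foldr (wr_plus pl pl') (map (evalT (wr_plus pl pl') (z,z') (tensor \<beta> \<gamma>)) ts) (z,z'))
     = evalF pl z \<beta> ts"
    using fst_evalF[unfolded evalF_def] by (simp add: evalF_def)
  have 3: "snd (tensor \<beta> \<gamma> a X) = \<gamma> (a, fst X) (snd X)" for X by (simp add: tensor_def)
  show ?case unfolding evalT.simps 3 2 snd_foldr map_map 1 relabT.simps ..
qed

lemma snd_evalF: "snd (evalF (wr_plus pl pl') (z,z') (tensor \<beta> \<gamma>) s)
   = evalF pl' z' \<gamma> (relab (evalF pl z \<beta>) s)"
  by (simp add: evalF_def[of pl' z' \<gamma>] evalF_def[of "wr_plus pl pl'"] relab_def snd_foldr snd_evalT comp_def)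

lemma reach_trans:
  assumes "\<forall>v\<in>W. \<forall>w\<in>W. v \<circ> w \<in> W" "reach W x y" "reach W y u"
  shows "reach W x u"
proof -
  obtain v where v: "v \<in> W" "x = v y" using assms(2) unfolding reach_def by blast
  obtain w where w: "w \<in> W" "y = w u" using assms(3) unfolding reach_def by blast
  have "v \<circ> w \<in> W" using assms(1) v w by blast
  then show ?thesis unfolding reach_def using v w by (intro bexI[of _ "v \<circ> w"]) simp_all
qed

lemma foldr_reach:
  assumes "\<forall>v\<in>W. \<forall>w\<in>W. v \<circ> w \<in> W" "\<forall>q. (\<lambda>p. P p q) \<in> W" "\<forall>q. (\<lambda>p. P q p) \<in> W" "id \<in> W"
  shows "x \<in> set xs \<Longrightarrow> \<exists>w\<in>W. foldr P (map g xs) z0 = w (g x)"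
proof (induction xs)
  case Nil then show ?case by simp
next
  case (Cons y ys)
  show ?case
  proof (cases "x = y")
    case True
    have "(\<lambda>p. P p (foldr P (map g ys) z0)) \<in> W" using assms(2) by blast
    then show ?thesis using True by (intro bexI[of _ "\<lambda>p. P p (foldr P (map g ys) z0)"]) simp_all
  next
    case False
    then obtain w where "w \<in> W" "foldr P (map g ys) z0 = w (g x)" using Cons by auto
    note w = this
    have "P (g y) \<in> W" using assms(3) by blast
    then have "P (g y) \<circ> w \<in> W" using assms(1) w(1) by blast
    then show ?thesis using w(2) by (intro bexI[of _ "P (g y) \<circ> w"]) simp_all
  qed
qed

lemma wr_memI: "v \<in> V \<Longrightarrow> (\<forall>h. f h \<in> V') \<Longrightarrow> (\<lambda>p. (v (fst p), f (fst p) (snd p))) \<in> wr_V V V'"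
  unfolding wr_V_def by blast

lemma wr_memE: "w \<in> wr_V V V' \<Longrightarrow> (\<And>v f. w = (\<lambda>p. (v (fst p), f (fst p) (snd p))) \<Longrightarrow> v \<in> V \<Longrightarrow> (\<forall>h. f h \<in> V') \<Longrightarrow> P) \<Longrightarrow> P"
  unfolding wr_V_def by blast

lemma fa_id: "forest_algebra pl z V \<Longrightarrow> id \<in> V" unfolding forest_algebra_def by blast
lemma fa_comp: "forest_algebra pl z V \<Longrightarrow> v \<in> V \<Longrightarrow> w \<in> V \<Longrightarrow> v \<circ> w \<in> V" unfolding forest_algebra_def by blast
lemma fa_pl1: "forest_algebra pl z V \<Longrightarrow> (\<lambda>g. pl g h) \<in> V" unfolding forest_algebra_def by blast
lemma fa_pl2: "forest_algebra pl z V \<Longrightarrow> (\<lambda>g. pl h g) \<in> V" unfolding forest_algebra_def by blast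

lemma wr_id: "forest_algebra pl z V \<Longrightarrow> forest_algebra pl' z' V' \<Longrightarrow> id \<in> wr_V V V'"
proof -
  assume a: "forest_algebra pl z V" "forest_algebra pl' z' V'"
  have m: "(\<lambda>p. (id (fst p), id (snd p))) \<in> wr_V V V'"
    using wr_memI[of id V "\<lambda>_. id" V'] fa_id[OF a(1)] fa_id[OF a(2)] by simp
  have "id = (\<lambda>p::'a\<times>'b. (id (fst p), id (snd p)))" by (simp add: fun_eq_iff)
  then show ?thesis using m by simp
qed

lemma wr_comp: "forest_algebra pl z V \<Longrightarrow> forest_algebra pl' z' V' \<Longrightarrow>
   \<forall>v\<in>wr_V V V'. \<forall>w\<in>wr_V V V'. v \<circ> w \<in> wr_V V V'"
proof (intro ballI)
  fix w1 w2 assume a: "forest_algebra pl z V" "forest_algebra pl' z' V'" and w: "w1 \<in> wr_V V V'" "w2 \<in> wr_V V V'"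
  obtain v1 f1 where
    1: "w1 = (\<lambda>p. (v1 (fst p), f1 (fst p) (snd p)))" "v1 \<in> V" "\<forall>h. f1 h \<in> V'"
    using w(1) by (rule wr_memE)
  obtain v2 f2 where
    2: "w2 = (\<lambda>p. (v2 (fst p), f2 (fst p) (snd p)))" "v2 \<in> V" "\<forall>h. f2 h \<in> V'"
    using w(2) by (rule wr_memE)
  have "w1 \<circ> w2 = (\<lambda>p. ((v1 \<circ> v2) (fst p), (\<lambda>h. f1 (v2 h) \<circ> f2 h) (fst p) (snd p)))"
    using 1 2 by (simp add: fun_eq_iff)
  also have "\<dots> \<in> wr_V V V'"
  proof (rule wr_memI)
    show "v1 \<circ> v2 \<in> V" by (rule fa_comp[OF a(1) 1(2) 2(2)])
    show "\<forall>h. f1 (v2 h) \<circ> f2 h \<in> V'" using fa_comp[OF a(2)] 1(3) 2(3) by blast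
  qed
  finally show "w1 \<circ> w2 \<in> wr_V V V'" .
qed

lemma wr_pl1: "forest_algebra pl z V \<Longrightarrow> forest_algebra pl' z' V' \<Longrightarrow> \<forall>q. (\<lambda>p. wr_plus pl pl' p q) \<in> wr_V V V'"
proof
  fix q assume a: "forest_algebra pl z V" "forest_algebra pl' z' V'"
  have "(\<lambda>p. wr_plus pl pl' p q) = (\<lambda>p. ((\<lambda>g. pl g (fst q)) (fst p), (\<lambda>_ g. pl' g (snd q)) (fst p) (snd p)))"
    by (simp add: fun_eq_iff wr_plus_def)
  also have "\<dots> \<in> wr_V V V'" by (rule wr_memI) (use fa_pl1[OF a(1)] fa_pl1[OF a(2)] in auto)
  finally show "(\<lambda>p. wr_plus pl pl' p q) \<in> wr_V V V'" .
qed

lemma wr_pl2: "forest_algebra pl z V \<Longrightarrow> forest_algebra pl' z' V' \<Longrightarrow> \<forall>q. (\<lambda>p. wr_plus pl pl' q p) \<in> wr_V V V'"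
proof
  fix q assume a: "forest_algebra pl z V" "forest_algebra pl' z' V'"
  have "(\<lambda>p. wr_plus pl pl' q p) = (\<lambda>p. ((\<lambda>g. pl (fst q) g) (fst p), (\<lambda>_ g. pl' (snd q) g) (fst p) (snd p)))"
    by (simp add: fun_eq_iff wr_plus_def)
  also have "\<dots> \<in> wr_V V V'" by (rule wr_memI) (use fa_pl2[OF a(1)] fa_pl2[OF a(2)] in auto)
  finally show "(\<lambda>p. wr_plus pl pl' q p) \<in> wr_V V V'" .
qed

lemma wr_tensor: "is_hom V \<beta> \<Longrightarrow> is_hom V' \<gamma> \<Longrightarrow> tensor \<beta> \<gamma> a \<in> wr_V V V'"
  unfolding tensor_def is_hom_def by (rule wr_memI) auto

lemma simk_sym: "simk k s s' \<Longrightarrow> simk k s' s"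
proof (induction k arbitrary: s s')
  case 0 then show ?case by simp
next
  case (Suc k)
  note P = simk_SucD[OF Suc.prems]
  note P1 = conjunct1[OF P] and P2 = conjunct2[OF P]
  have A: "\<exists>t\<in>set s. root t' = root t \<and> simk k (children t') (children t)" if tt: "t' \<in> set s'" for t'
  proof -
    from P2 tt obtain t where "t \<in> set s" "root t = root t'" "simk k (children t) (children t')"
      by blast
    then show ?thesis using Suc.IH[of "children t" "children t'"] by (intro bexI[of _ t]) auto
  qed
  have B: "\<exists>t'\<in>set s'. root t' = root t \<and> simk k (children t') (children t)" if tt: "t \<in> set s" for t
  proof -
    from P1 tt obtain t' where "t' \<in> set s'" "root t = root t'" "simk k (children t) (children t')"
      by blast
    then show ?thesis using Suc.IH[of "children t" "children t'"] by (intro bexI[of _ t']) auto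
  qed
  show ?case using A B by (intro simk_SucI) blast+
qed

locale L =
  fixes pl :: "'h \<Rightarrow> 'h \<Rightarrow> 'h" and z :: 'h and V :: "('h \<Rightarrow> 'h) set"
    and pl' :: "'g \<Rightarrow> 'g \<Rightarrow> 'g" and z' :: 'g and V' :: "('g \<Rightarrow> 'g) set"
    and \<beta> :: "'a \<Rightarrow> 'h \<Rightarrow> 'h" and \<gamma> :: "'a \<times> 'h \<Rightarrow> 'g \<Rightarrow> 'g"
  assumes FA: "forest_algebra pl z V" and FA': "forest_algebra pl' z' V'"
    and hb: "is_hom V \<beta>" and hg: "is_hom V' \<gamma>"
begin

abbreviation "W \<equiv> wr_V V V'"
abbreviation "al \<equiv> evalF (wr_plus pl pl') (z,z') (tensor \<beta> \<gamma>)"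
abbreviation "be \<equiv> evalF pl z \<beta>"
abbreviation "dA \<Gamma> \<equiv> delta_cls (wr_plus pl pl') (z,z') W (tensor \<beta> \<gamma>) \<Gamma>"
abbreviation "dB \<Delta> \<equiv> delta_cls pl z V \<beta> \<Delta>"
definition "Q \<Gamma> x \<longleftrightarrow> (\<exists>g\<in>\<Gamma>. reach W g x)"

lemma Wc: "\<forall>v\<in>W. \<forall>w\<in>W. v \<circ> w \<in> W" by (rule wr_comp[OF FA FA'])
lemma Wid: "id \<in> W" by (rule wr_id[OF FA FA'])

lemma reach_refl: "reach W x x"
  unfolding reach_def using Wid by (intro bexI[of _ id]) auto

lemma child_reach:
  assumes "Node a ts \<in> set t" shows "reach W (al t) (al ts)"
proof -
  obtain w where w: "w \<in> W" "foldr (wr_plus pl pl') (map (evalT (wr_plus pl pl') (z,z') (tensor \<beta> \<gamma>)) t) (z,z')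
      = w (evalT (wr_plus pl pl') (z,z') (tensor \<beta> \<gamma>) (Node a ts))"
    using foldr_reach[OF Wc wr_pl1[OF FA FA'] wr_pl2[OF FA FA'] Wid assms] by blast
  have e: "evalT (wr_plus pl pl') (z,z') (tensor \<beta> \<gamma>) (Node a ts) = tensor \<beta> \<gamma> a (al ts)"
    by (simp add: evalF_def)
  have "w \<circ> tensor \<beta> \<gamma> a \<in> W" using Wc w(1) wr_tensor[OF hb hg] by blast
  moreover have "al t = (w \<circ> tensor \<beta> \<gamma> a) (al ts)" using w(2) e by (simp add: evalF_def)
  ultimately show ?thesis unfolding reach_def by blast
qed

lemma Q_trans: "Q \<Gamma> x \<Longrightarrow> reach W x y \<Longrightarrow> Q \<Gamma> y"
  unfolding Q_def using reach_trans[OF Wc] by blast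

lemma reach_fst: "reach W x y \<Longrightarrow> reach V (fst x) (fst y)"
proof -
  assume "reach W x y"
  then obtain w where w: "w \<in> W" "x = w y" unfolding reach_def by blast
  obtain v f where "w = (\<lambda>p. (v (fst p), f (fst p) (snd p)))" "v \<in> V" "\<forall>h. f h \<in> V'"
    using w(1) by (rule wr_memE)
  then show ?thesis using w unfolding reach_def by auto
qed

lemma cls_fst: "x \<in> clsof W h0 \<Longrightarrow> fst x \<in> clsof V (fst h0)"
  unfolding clsof_def using reach_fst by blast

lemma Q_fst: "Q (clsof W h0) x \<Longrightarrow> \<exists>g\<in>clsof V (fst h0). reach V g (fst x)"
  unfolding Q_def using reach_fst cls_fst by blast

lemma label_eq:
  assumes "Q (clsof W h0) (al u)"
  shows "Fl (clsof V (fst h0)) (a, dA (clsof W h0) u) = (a, dB (clsof V (fst h0)) u)"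
proof (cases "al u \<in> clsof W h0")
  case True
  then have "be u \<in> clsof V (fst h0)" using cls_fst fst_evalF by metis
  then show ?thesis using True unfolding delta_cls_def above_def Fl_def by simp
next
  case False
  have "\<exists>g\<in>clsof V (fst h0). reach V g (be u)" using Q_fst[OF assms] fst_evalF by metis
  then show ?thesis using False assms unfolding delta_cls_def above_def Fl_def Q_def
    by (simp add: fst_evalF)
qed

lemma relabT_eq:
  "Q (clsof W h0) (al (children T)) \<Longrightarrow>
   relabT (dB (clsof V (fst h0))) T = map_tree (Fl (clsof V (fst h0))) (relabT (dA (clsof W h0)) T)"
proof (induction T)
  case (Node a ts)
  have c: "relabT (dB (clsof V (fst h0))) T = map_tree (Fl (clsof V (fst h0))) (relabT (dA (clsof W h0)) T)"
    if T: "T \<in> set ts" for T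
  proof -
    obtain b us where Tb: "T = Node b us" by (cases T)
    have "Q (clsof W h0) (al us)"
      using Q_trans[OF Node.prems[simplified] child_reach] T Tb by auto
    then show ?thesis using Node.IH[OF T] T Tb by simp
  qed
  have l: "Fl (clsof V (fst h0)) (a, dA (clsof W h0) ts) = (a, dB (clsof V (fst h0)) ts)"
    using label_eq Node.prems by simp
  show ?case using c l by simp
qed

lemma relab_eq:
  "Q (clsof W h0) (al t) \<Longrightarrow>
   relab (dB (clsof V (fst h0))) t = map (map_tree (Fl (clsof V (fst h0)))) (relab (dA (clsof W h0)) t)"
  unfolding relab_def map_map
proof (rule map_cong[OF refl])
  fix T assume "Q (clsof W h0) (al t)" "T \<in> set t"
  moreover obtain a ts where T: "T = Node a ts" by (cases T)
  ultimately have "Q (clsof W h0) (al ts)" using Q_trans child_reach by blast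
  then have "Q (clsof W h0) (al (children T))" using T by simp
  then show "relabT (dB (clsof V (fst h0))) T = (map_tree (Fl (clsof V (fst h0))) \<circ> relabT (dA (clsof W h0))) T"
    by (simp only: comp_apply relabT_eq)
qed

lemma lemB:
  assumes NC: "\<forall>\<Delta>\<in>reach_classes V. \<forall>s1 s2. equiv_dkG pl z V \<beta> kb \<Delta> s1 s2 \<longrightarrow> be s1 = be s2"
    and t1: "al t1 \<in> clsof W h0" and t2: "al t2 \<in> clsof W h0"
    and sk: "simk kb (relab (dA (clsof W h0)) t1) (relab (dA (clsof W h0)) t2)"
  shows "be t1 = be t2"
proof -
  have q1: "Q (clsof W h0) (al t1)" using t1 reach_refl unfolding Q_def by blast
  have q2: "Q (clsof W h0) (al t2)" using t2 reach_refl unfolding Q_def by blast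
  have "simk kb (relab (dB (clsof V (fst h0))) t1) (relab (dB (clsof V (fst h0))) t2)"
    unfolding relab_eq[OF q1] relab_eq[OF q2] by (rule simk_map[OF sk])
  moreover have "be t1 \<in> clsof V (fst h0)" "be t2 \<in> clsof V (fst h0)"
    using cls_fst t1 t2 fst_evalF by metis+
  moreover have "clsof V (fst h0) \<in> reach_classes V"
    unfolding reach_classes_def clsof_def by blast
  ultimately show ?thesis using NC unfolding equiv_dkG_def by blast
qed

lemma roots_sub:
  assumes NC: "\<forall>\<Delta>\<in>reach_classes V. \<forall>s1 s2. equiv_dkG pl z V \<beta> kb \<Delta> s1 s2 \<longrightarrow> be s1 = be s2"
    and s1: "al s1 \<in> clsof W h0" and s2: "al s2 \<in> clsof W h0"
    and H: "\<forall>t\<in>set (relab (dA (clsof W h0)) s1). \<exists>t'\<in>set (relab (dA (clsof W h0)) s2).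
              root t = root t' \<and> simk kb (children t) (children t')"
  shows "set (map root (relab be s1)) \<subseteq> set (map root (relab be s2))"
proof
  fix x assume "x \<in> set (map root (relab be s1))"
  then obtain T where T: "T \<in> set s1" "x = root (relabT be T)" unfolding relab_def by auto
  obtain a ts where Ta: "T = Node a ts" by (cases T)
  have "relabT (dA (clsof W h0)) T \<in> set (relab (dA (clsof W h0)) s1)" using T unfolding relab_def by auto
  then obtain t' where t': "t' \<in> set (relab (dA (clsof W h0)) s2)"
    "root (relabT (dA (clsof W h0)) T) = root t'"
    "simk kb (children (relabT (dA (clsof W h0)) T)) (children t')" using H by blast
  then obtain T' where T': "T' \<in> set s2" "t' = relabT (dA (clsof W h0)) T'" unfolding relab_def by auto
  obtain b us where Tb: "T' = Node b us" by (cases T')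
  have ab: "a = b" and dd: "dA (clsof W h0) ts = dA (clsof W h0) us"
    using t' T' Ta Tb by auto
  have sk: "simk kb (relab (dA (clsof W h0)) ts) (relab (dA (clsof W h0)) us)"
    using t' T' Ta Tb by (simp add: relab_def)
  have qts: "Q (clsof W h0) (al ts)"
    using Q_trans[OF _ child_reach] s1 reach_refl T Ta unfolding Q_def by blast
  have qus: "Q (clsof W h0) (al us)"
    using Q_trans[OF _ child_reach] s2 reach_refl T' Tb unfolding Q_def by blast
  have "be ts = be us"
  proof (cases "above W (al ts) (clsof W h0)")
    case True
    then have "above W (al us) (clsof W h0)" "al ts = al us" using dd unfolding delta_cls_def
      by (auto split: if_splits)
    then show ?thesis using fst_evalF by metis
  next
    case False
    then have F2: "\<not> above W (al us) (clsof W h0)" using dd unfolding delta_cls_def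
      by (auto split: if_splits)
    have "al ts \<in> clsof W h0" using False qts unfolding above_def Q_def by blast
    moreover have "al us \<in> clsof W h0" using F2 qus unfolding above_def Q_def by blast
    ultimately show ?thesis using lemB[OF NC _ _ sk] by blast
  qed
  then have "x = root (relabT be T')" using T(2) Ta Tb ab by simp
  then show "x \<in> set (map root (relab be s2))" using T' unfolding relab_def by auto
qed

lemma main:
  assumes NC: "\<forall>\<Delta>\<in>reach_classes V. \<forall>s1 s2. equiv_dkG pl z V \<beta> kb \<Delta> s1 s2 \<longrightarrow> be s1 = be s2"
    and OD: "one_definite pl' z' \<gamma>"
  shows "nonconfusing (wr_plus pl pl') (z, z') W (tensor \<beta> \<gamma>)"
  unfolding nonconfusing_def
proof (intro exI[of _ "Suc kb"] conjI allI ballI impI)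
  show "0 < Suc kb" by simp
  fix \<Gamma> s1 s2 assume G: "\<Gamma> \<in> reach_classes W" and E: "equiv_dkG (wr_plus pl pl') (z, z') W (tensor \<beta> \<gamma>) (Suc kb) \<Gamma> s1 s2"
  obtain h0 where h0: "\<Gamma> = clsof W h0" using G unfolding reach_classes_def clsof_def by blast
  have s1: "al s1 \<in> clsof W h0" and s2: "al s2 \<in> clsof W h0" and
    sk: "simk (Suc kb) (relab (dA (clsof W h0)) s1) (relab (dA (clsof W h0)) s2)"
  proof -
    note E' = E[unfolded equiv_dkG_def h0]
    show "simk (Suc kb) (relab (dA (clsof W h0)) s1) (relab (dA (clsof W h0)) s2)" by (rule conjunct1[OF E'])
    show "al s1 \<in> clsof W h0" by (rule conjunct1[OF conjunct2[OF E']])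
    show "al s2 \<in> clsof W h0" by (rule conjunct2[OF conjunct2[OF E']])
  qed
  have "be s1 = be s2" using lemB[OF NC s1 s2 simk_mono[OF sk]] .
  then have f: "fst (al s1) = fst (al s2)" unfolding fst_evalF .
  have sk2: "simk (Suc kb) (relab (dA (clsof W h0)) s2) (relab (dA (clsof W h0)) s1)"
    using simk_sym[OF sk] .
  have "set (map root (relab be s1)) = set (map root (relab be s2))"
    using roots_sub[OF NC s1 s2 conjunct1[OF simk_SucD[OF sk]]] roots_sub[OF NC s2 s1 conjunct1[OF simk_SucD[OF sk2]]]
    by (rule equalityI)
  then have "evalF pl' z' \<gamma> (relab be s1) = evalF pl' z' \<gamma> (relab be s2)"
    using OD unfolding one_definite_def by blast
  then have "snd (al s1) = snd (al s2)" unfolding snd_evalF .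
  with f show "al s1 = al s2" by (rule prod_eqI)
qed

end

theorem lemma8:
  fixes pl :: "'h \<Rightarrow> 'h \<Rightarrow> 'h" and z :: 'h and V :: "('h \<Rightarrow> 'h) set"
    and pl' :: "'g \<Rightarrow> 'g \<Rightarrow> 'g" and z' :: 'g and V' :: "('g \<Rightarrow> 'g) set"
    and \<beta> :: "'a \<Rightarrow> 'h \<Rightarrow> 'h" and \<gamma> :: "'a \<times> 'h \<Rightarrow> 'g \<Rightarrow> 'g"
  assumes "finite (UNIV :: 'a set)"
    and "finite (UNIV :: 'h set)" and "finite (UNIV :: 'g set)"
    and "forest_algebra pl z V" and "forest_algebra pl' z' V'"
    and "idem_comm pl" and "idem_comm pl'"
    and "is_hom V \<beta>" and "is_hom V' \<gamma>"
    and "nonconfusing pl z V \<beta>"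
    and "one_definite pl' z' \<gamma>"
  shows "nonconfusing (wr_plus pl pl') (z, z') (wr_V V V') (tensor \<beta> \<gamma>)"
proof -
  interpret L pl z V pl' z' V' \<beta> \<gamma> using assms(4,5,8,9) by unfold_locales
  obtain kb where "\<forall>\<Delta>\<in>reach_classes V. \<forall>s1 s2. equiv_dkG pl z V \<beta> kb \<Delta> s1 s2 \<longrightarrow> evalF pl z \<beta> s1 = evalF pl z \<beta> s2"
    using assms(10) unfolding nonconfusing_def by blast
  from main[OF this assms(11)] show ?thesis .
qed

end
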